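(* Let $U\subset\mathbb{C}\setminus\{0\}$ be a (connected) domain on which an analytic branch of $\ln x$ is fixed, and let $f$ be a nowhere-vanishing complex-differentiable function on $U$. Then $\mathcal{A}[f]=f$ on $U$ if and only if there is a constant $a\in\mathbb{C}$ with $a-\ln x\neq 0$ on $U$ such that \[ f(x)=\frac{1}{a-\ln x}\qquad (x\in U). \]
   Context: For a complex-differentiable, nowhere-vanishing function $f$ on a domain $U\subset\mathbb{C}\setminus\{0\}$, the dual logarithmic derivative operator is $\mathcal{A}[f](x)=\dfrac{\mathrm{d}\ln f(x)}{\mathrm{d}\ln x}=\dfrac{x f'(x)}{f(x)}$ (for fixed analytic branches of the logarithms). A function $f$ with $\mathcal{A}[f]=f$ is called a fixed point of $\mathcal{A}$. *)

theory Defs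
  imports "HOL-Complex_Analysis.Complex_Analysis"
begin

text \<open>Dual logarithmic derivative: d ln f(x) / d ln x = x f'(x) / f(x).\<close>
definition dual_log_deriv :: "(complex \<Rightarrow> complex) \<Rightarrow> complex \<Rightarrow> complex" where
  "dual_log_deriv f x = x * deriv f x / f x"

definition log_branch_on :: "(complex \<Rightarrow> complex) \<Rightarrow> complex set \<Rightarrow> bool" where
  "log_branch_on L U \<longleftrightarrow> L holomorphic_on U \<and> (\<forall>x\<in>U. exp (L x) = x)"

end

theory Submission
  imports Defs
begin

lemma aux_A: fixes d fz z :: complex assumes "d = fz ^ 2 / z" "fz \<noteq> 0" "z\<noteq>0"
  shows "- (d * inverse (fz ^ Suc (Suc 0))) + 1 / z = 0"
  using assms by (simp add: field_simps power2_eq_square)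
lemma aux_B: fixes D fz z a Lz :: complex assumes "D = (1/z) / (a - Lz)^2" "fz = 1/(a-Lz)" "a - Lz \<noteq> 0" "z\<noteq>0"
  shows "z * D / fz = fz"
  using assms by (simp add: power2_eq_square)
lemma aux_C: fixes d fz z :: complex assumes "z * d / fz = fz" "fz \<noteq> 0" "z\<noteq>0"
  shows "d = fz ^ 2 / z"
  using assms by (simp add: field_simps power2_eq_square)

theorem theorem5p3:
  fixes U :: "complex set" and f L :: "complex \<Rightarrow> complex"
  assumes "open U" and "connected U" and "U \<noteq> {}" and "0 \<notin> U"
    and "log_branch_on L U"
    and "f holomorphic_on U" and "\<forall>x\<in>U. f x \<noteq> 0"
  shows "(\<forall>x\<in>U. dual_log_deriv f x = f x) \<longleftrightarrow>
         (\<exists>a::complex. (\<forall>x\<in>U. a - L x \<noteq> 0) \<and> (\<forall>x\<in>U. f x = 1 / (a - L x)))"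
proof -
  have Lh: "L holomorphic_on U" and Le: "\<And>w. w \<in> U \<Longrightarrow> exp (L w) = w"
    using assms(5) unfolding log_branch_on_def by auto
  have dL: "\<And>z. z \<in> U \<Longrightarrow> (L has_field_derivative 1 / z) (at z)"
    using has_field_derivative_complex_logarithm[OF Le Lh _ assms(1)] by blast
  have df: "\<And>z. z \<in> U \<Longrightarrow> (f has_field_derivative deriv f z) (at z)"
    using assms(1,6) holomorphic_derivI by blast
  have nz: "\<And>z. z \<in> U \<Longrightarrow> z \<noteq> 0" using assms(4) by auto
  show ?thesis
  proof
    assume H: "\<forall>x\<in>U. dual_log_deriv f x = f x"
    have "(\<lambda>w. 1 / f w + L w) constant_on U"
    proof (rule has_field_derivative_0_imp_constant_on[OF _ assms(2,1)])
      fix z assume z: "z \<in> U"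
      have fz: "f z \<noteq> 0" using assms(7) z by auto
      have eq: "deriv f z = f z ^ 2 / z"
      proof -
        have "z * deriv f z / f z = f z" using H z unfolding dual_log_deriv_def by blast
        then show ?thesis by (rule aux_C[OF _ fz nz[OF z]])
      qed
      have "((\<lambda>w. inverse (f w) + L w) has_field_derivative
              (- (deriv f z * inverse (f z ^ Suc (Suc 0)))) + 1 / z) (at z)"
        by (rule DERIV_add[OF DERIV_inverse_fun[OF df[OF z] fz] dL[OF z]])
      moreover have "- (deriv f z * inverse (f z ^ Suc (Suc 0))) + 1 / z = 0"
        using eq fz nz[OF z] by (rule aux_A)
      ultimately show "((\<lambda>w. 1 / f w + L w) has_field_derivative 0) (at z)"
        by (simp add: inverse_eq_divide)
    qed
    then obtain a where a: "\<And>x. x \<in> U \<Longrightarrow> 1 / f x + L x = a"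
      unfolding constant_on_def by blast
    show "\<exists>a. (\<forall>x\<in>U. a - L x \<noteq> 0) \<and> (\<forall>x\<in>U. f x = 1 / (a - L x))"
    proof (intro exI conjI ballI)
      fix x assume x: "x \<in> U"
      have "a - L x = 1 / f x" proof -
        have "a - L x = (1 / f x + L x) - L x" using a[OF x] by simp
        then show ?thesis by simp
      qed
      then show "a - L x \<noteq> 0" "f x = 1 / (a - L x)" using assms(7) x by auto
    qed
  next
    assume "\<exists>a. (\<forall>x\<in>U. a - L x \<noteq> 0) \<and> (\<forall>x\<in>U. f x = 1 / (a - L x))"
    then obtain a where a1: "\<And>x. x \<in> U \<Longrightarrow> a - L x \<noteq> 0"
      and a2: "\<And>x. x \<in> U \<Longrightarrow> f x = 1 / (a - L x)" by blast
    show "\<forall>x\<in>U. dual_log_deriv f x = f x"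
    proof
      fix z assume z: "z \<in> U"
      have "((\<lambda>w. inverse (a - L w)) has_field_derivative
          - ((0 - 1 / z) * inverse ((a - L z) ^ Suc (Suc 0)))) (at z)"
        by (rule DERIV_inverse_fun[OF DERIV_diff[OF DERIV_const dL[OF z]] a1[OF z]])
      then have "((\<lambda>w. 1 / (a - L w)) has_field_derivative (1 / z) / (a - L z)^2) (at z)"
        by (simp add: inverse_eq_divide power2_eq_square)
      then have "(f has_field_derivative (1 / z) / (a - L z)^2) (at z)"
        by (rule has_field_derivative_transform_within_open[OF _ assms(1) z]) (simp add: a2)
      then have "deriv f z = (1 / z) / (a - L z)^2" by (rule DERIV_imp_deriv)
      then show "dual_log_deriv f z = f z"
        unfolding dual_log_deriv_def by (rule aux_B[OF _ a2[OF z] a1[OF z] nz[OF z]])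
    qed
  qed
qed

end
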